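(* Let $B \in M_m \otimes M_n$ be symmetric. Then $W^{1+i}_{\max}(B)$ equals the optimal value of the optimization problem \[ \text{maximize } \operatorname{Tr}(BX) \ \text{ subject to } \ \operatorname{Tr}(BX) = \operatorname{Tr}(BX^\Gamma),\ \operatorname{Tr}(X) = 1,\ X \succeq 0, \] over real symmetric matrices $X \in M_m\otimes M_n$, and it also equals the optimal value of \[ \text{minimize } c \ \text{ subject to } \ pB + (1-p)B^\Gamma \preceq cI, \] over $c, p \in \mathbb{R}$.
   Context: $M_n$ denotes real $n\times n$ matrices and $M_m\otimes M_n$ is identified with $M_{mn}$ via the Kronecker product. For $A = \sum_j X_j \otimes Y_j \in M_m\otimes M_n$, the partial transpose is the linear map $A^\Gamma = \sum_j X_j \otimes Y_j^T$. $X\succeq 0$ means $X$ is positive semidefinite, and $S \preceq cI$ means $cI - S$ is positive semidefinite. The numerical range of a complex matrix $A\in M_N(\mathbb{C})$ is $W(A) = \{\mathbf{x}^*A\mathbf{x} : \mathbf{x}\in\mathbb{C}^N, \|\mathbf{x}\|=1\}$. Define $W^{1+i}(B) = \{c\in\mathbb{R} : c(1+i) \in W(B + iB^\Gamma)\}$; this is a nonempty compact interval, and $W^{1+i}_{\max}(B)$ denotes its maximum. *)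

theory Defs
  imports "HOL-Analysis.Analysis"
begin

text \<open>Matrices in M_m (x) M_n = M_{mn} are indexed by pairs (a,b) with a :: 'm, b :: 'n;
  the Kronecker product X (x) Y has entry X a c * Y b d at ((a,b),(c,d)).\<close>

type_synonym ('m,'n) bimat = "real ^ ('m \<times> 'n) ^ ('m \<times> 'n)"

definition kron :: "real^'m^'m \<Rightarrow> real^'n^'n \<Rightarrow> ('m::finite,'n::finite) bimat" where
  "kron X Y = (\<chi> i j. X $ fst i $ fst j * Y $ snd i $ snd j)"

text \<open>Partial transpose: the linear map with (X (x) Y)^Gamma = X (x) Y^T, i.e.
  A^Gamma ((a,b),(c,d)) = A ((a,d),(c,b)).\<close>
definition ptrans :: "('m::finite,'n::finite) bimat \<Rightarrow> ('m,'n) bimat" where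
  "ptrans A = (\<chi> i j. A $ (fst i, snd j) $ (fst j, snd i))"

lemma ptrans_kron: "ptrans (kron X Y) = kron X (transpose Y)"
  by (simp add: ptrans_def kron_def transpose_def vec_eq_iff)

definition symmetric_mat :: "'a^'k^'k \<Rightarrow> bool" where
  "symmetric_mat A \<longleftrightarrow> transpose A = A"

definition psd :: "real^'k^'k \<Rightarrow> bool" where
  "psd A \<longleftrightarrow> symmetric_mat A \<and> (\<forall>x. 0 \<le> x \<bullet> (A *v x))"

definition numerical_range :: "complex^'k^'k \<Rightarrow> complex set" where
  "numerical_range A = {(\<Sum>i\<in>UNIV. \<Sum>j\<in>UNIV. cnj (x $ i) * A $ i $ j * x $ j) | x. norm x = 1}"

definition W1i :: "('m::finite,'n::finite) bimat \<Rightarrow> real set" where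
  "W1i B = {c. complex_of_real c * (1 + \<i>) \<in>
      numerical_range (\<chi> i j. complex_of_real (B $ i $ j) + \<i> * complex_of_real (ptrans B $ i $ j))}"

definition W1i_max :: "('m::finite,'n::finite) bimat \<Rightarrow> real" where
  "W1i_max B = Sup (W1i B)"

end

theory Submission
  imports Defs
begin


definition bf :: "real^'k^'k \<Rightarrow> real^'k \<Rightarrow> real^'k \<Rightarrow> real" where
  "bf M x y = (\<Sum>i\<in>UNIV. \<Sum>j\<in>UNIV. x$i * M$i$j * y$j)"

lemma inner_mv: "x \<bullet> (M *v y) = bf M x y"
  by (simp add: bf_def inner_vec_def matrix_vector_mult_def sum_distrib_left mult.assoc)

lemma bf_add_l: "bf M (x + y) z = bf M x z + bf M y z"
  by (simp add: bf_def algebra_simps sum.distrib)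
lemma bf_add_r: "bf M z (x + y) = bf M z x + bf M z y"
  by (simp add: bf_def algebra_simps sum.distrib)
lemma bf_scale_l: "bf M (c *\<^sub>R x) z = c * bf M x z"
  by (simp add: bf_def algebra_simps sum_distrib_left)
lemma bf_scale_r: "bf M z (c *\<^sub>R x) = c * bf M z x"
  by (simp add: bf_def algebra_simps sum_distrib_left)
lemma bf_neg_l: "bf M (- x) z = - bf M x z"
  by (simp add: bf_def sum_negf)
lemma bf_mat_add: "bf (M + N) x y = bf M x y + bf N x y"
  by (simp add: bf_def algebra_simps sum.distrib)
lemma bf_mat_diff: "bf (M - N) x y = bf M x y - bf N x y"
  by (simp add: bf_def algebra_simps sum_subtractf)
lemma bf_mat_scale: "bf (c *\<^sub>R M) x y = c * bf M x y"
  by (simp add: bf_def algebra_simps sum_distrib_left)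
lemma bf_mat1: "bf (mat 1) x y = x \<bullet> y"
proof -
  have "\<And>i j. x$i * (mat 1::real^'a^'a)$i$j * y$j = (if i = j then x$i*y$j else 0)"
    by (simp add: mat_def)
  thus ?thesis unfolding bf_def inner_vec_def by simp
qed

lemma sym_entry: "symmetric_mat M \<Longrightarrow> M$i$j = M$j$i"
proof -
  assume "symmetric_mat M"
  hence "transpose M $ i $ j = M $ i $ j" unfolding symmetric_mat_def by simp
  thus ?thesis by (simp add: transpose_def)
qed

lemma bf_sym: "symmetric_mat M \<Longrightarrow> bf M x y = bf M y x"
  unfolding bf_def
  apply (subst sum.swap)
  apply (intro sum.cong refl)
  by (simp add: sym_entry[of M])

lemma quad_disc:
  fixes a b c :: real
  assumes "\<And>t. 0 \<le> a + 2*t*b + t*t*c" and c0: "0 \<le> c"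
  shows "b*b \<le> a*c"
proof (cases "c = 0")
  case True
  have "b = 0"
  proof (rule ccontr)
    assume "b \<noteq> 0"
    have "0 \<le> a + 2*(-(a+1)/(2*b))*b" using assms(1)[of "-(a+1)/(2*b)"] True by simp
    also have "\<dots> = -1" using \<open>b \<noteq> 0\<close> by (simp add: field_simps)
    finally show False by simp
  qed
  thus ?thesis using True by simp
next
  case False
  hence cp: "c > 0" using c0 by simp
  have "0 \<le> a + 2*(-b/c)*b + (-b/c)*(-b/c)*c" by (rule assms(1))
  also have "\<dots> = (a*c - b*b)/c" using cp by (simp add: field_simps)
  finally show ?thesis using cp by (simp add: divide_nonneg_pos zero_le_divide_iff)
qed

definition posf :: "real^'k^'k \<Rightarrow> bool" where
  "posf M \<longleftrightarrow> symmetric_mat M \<and> (\<forall>x. 0 \<le> bf M x x)"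

lemma psd_posf: "psd M \<longleftrightarrow> posf M"
  by (simp add: psd_def posf_def inner_mv)

lemma bf_expand:
  assumes "symmetric_mat M"
  shows "bf M (x + t *\<^sub>R y) (x + t *\<^sub>R y) = bf M x x + 2*t*bf M x y + t*t*bf M y y"
  using bf_sym[OF assms, of y x]
  by (simp add: bf_add_l bf_add_r bf_scale_l bf_scale_r algebra_simps)

lemma cs:
  assumes "posf M"
  shows "bf M x y * bf M x y \<le> bf M x x * bf M y y"
proof (rule quad_disc)
  fix t
  show "0 \<le> bf M x x + 2 * t * bf M x y + t * t * bf M y y"
    using assms bf_expand[of M x t y] unfolding posf_def by metis
  show "0 \<le> bf M y y" using assms unfolding posf_def by auto
qed

lemma bf_axis_r: "bf M x (axis l 1) = (\<Sum>i\<in>UNIV. x$i * M$i$l)"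
proof -
  have "\<And>i j. x$i * M$i$j * (axis l 1 :: real^'a)$j = (if j = l then x$i * M$i$l else 0)"
    by (simp add: axis_def)
  thus ?thesis unfolding bf_def by simp
qed

lemma bf_axis: "bf M (axis k 1) (axis l 1) = M$k$l"
proof -
  have "\<And>i. (axis k 1 :: real^'a)$i * M$i$l = (if i = k then M$k$l else 0)"
    by (simp add: axis_def)
  thus ?thesis unfolding bf_axis_r by simp
qed

definition tr2 :: "real^'k^'k \<Rightarrow> real^'k^'k \<Rightarrow> real" where
  "tr2 P X = (\<Sum>i\<in>UNIV. \<Sum>j\<in>UNIV. P$i$j * X$j$i)"

lemma trace_tr2: "trace (P ** X) = tr2 P X"
  by (simp add: trace_def matrix_matrix_mult_def tr2_def)

lemma tr2_diff: "tr2 P (X - Y) = tr2 P X - tr2 P Y"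
  by (simp add: tr2_def algebra_simps sum_subtractf)

lemma tr2_outer: "tr2 P (\<chi> i j. y$i * y$j) = bf P y y"
  unfolding tr2_def bf_def
  by (intro sum.cong refl) (simp add: algebra_simps)

lemma posf_diag_zero:
  assumes "posf X" "X$j$j = 0"
  shows "X$j$l = 0"
proof -
  have "bf X (axis j 1) (axis l 1) * bf X (axis j 1) (axis l 1) \<le> bf X (axis j 1) (axis j 1) * bf X (axis l 1) (axis l 1)"
    by (rule cs[OF assms(1)])
  hence "X$j$l * X$j$l \<le> 0" using assms(2) by (simp add: bf_axis)
  thus ?thesis by (smt (verit) mult_le_0_iff)
qed

lemma tr2_nonneg_aux:
  "\<forall>X::real^'k^'k. posf X \<longrightarrow> card {k. X$k$k \<noteq> 0} = n \<longrightarrow> 0 \<le> tr2 P X" if P: "posf P"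
proof (induction n rule: less_induct)
  case (less n)
  show ?case
  proof (intro allI impI)
    fix X :: "real^'k^'k"
    assume X: "posf X" and cn: "card {k. X$k$k \<noteq> 0} = n"
    show "0 \<le> tr2 P X"
    proof (cases "\<exists>k. X$k$k \<noteq> 0")
      case False
      hence "\<And>i j. X$i$j = 0" using posf_diag_zero[OF X] by blast
      thus ?thesis by (simp add: tr2_def)
    next
      case True
      then obtain k where k: "X$k$k \<noteq> 0" by blast
      have xk0: "0 \<le> X$k$k" using X unfolding posf_def by (metis bf_axis)
      hence xk: "0 < X$k$k" using k by simp
      define y :: "real^'k" where "y = (\<chi> i. X$i$k / sqrt (X$k$k))"
      define X' where "X' = X - (\<chi> i j. y$i * y$j)"
      have yy: "y$i * y$j = X$i$k * X$j$k / X$k$k" for i j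
        using xk by (simp add: y_def real_sqrt_mult[symmetric] )
      have X'e: "X'$i$j = X$i$j - X$i$k * X$j$k / X$k$k" for i j
        by (simp add: X'_def yy)
      have symX: "symmetric_mat X" using X posf_def by auto
      have "symmetric_mat X'"
        unfolding symmetric_mat_def
        by (simp add: vec_eq_iff transpose_def X'e sym_entry[OF symX] mult.commute)
      moreover have "0 \<le> bf X' z z" for z
      proof -
        have e1: "bf X' z z = bf X z z - bf X z (axis k 1) * bf X z (axis k 1) / X$k$k"
        proof -
          have t: "z$i * X'$i$j * z$j = z$i*X$i$j*z$j - ((z$i*X$i$k)*(z$j*X$j$k))/X$k$k" for i j
            using xk by (simp add: X'e field_simps)
          have "bf X' z z = bf X z z - (\<Sum>i\<in>UNIV. \<Sum>j\<in>UNIV. (z$i*X$i$k)*(z$j*X$j$k))/X$k$k"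
            unfolding bf_def t by (simp add: sum_subtractf sum_divide_distrib)
          also have "(\<Sum>i\<in>UNIV. \<Sum>j\<in>UNIV. (z$i*X$i$k)*(z$j*X$j$k)) = bf X z (axis k 1) * bf X z (axis k 1)"
            unfolding bf_axis_r sum_product by simp
          finally show ?thesis .
        qed
        have "bf X z (axis k 1) * bf X z (axis k 1) \<le> bf X z z * X$k$k"
          using cs[OF X, of z "axis k 1"] by (simp add: bf_axis)
        hence "bf X z (axis k 1) * bf X z (axis k 1) / X$k$k \<le> bf X z z"
          using xk by (simp add: divide_le_eq)
        thus ?thesis using e1 by simp
      qed
      ultimately have X'p: "posf X'" unfolding posf_def by blast
      have sub: "{j. X'$j$j \<noteq> 0} \<subseteq> {j. X$j$j \<noteq> 0} - {k}"
      proof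
        fix j assume "j \<in> {j. X'$j$j \<noteq> 0}"
        hence j: "X'$j$j \<noteq> 0" by simp
        have "j \<noteq> k" using j xk by (auto simp: X'e)
        moreover have "X$j$j \<noteq> 0"
        proof
          assume "X$j$j = 0"
          hence "X$j$k = 0" by (rule posf_diag_zero[OF X])
          thus False using j \<open>X$j$j = 0\<close> by (simp add: X'e)
        qed
        ultimately show "j \<in> {j. X$j$j \<noteq> 0} - {k}" by simp
      qed
      have "card {j. X'$j$j \<noteq> 0} \<le> card ({j. X$j$j \<noteq> 0} - {k})"
        by (rule card_mono[OF _ sub]) simp
      also have "\<dots> < n"
      proof -
        have "k \<in> {j. X$j$j \<noteq> 0}" using k by simp
        hence "card ({j. X$j$j \<noteq> 0} - {k}) < card {j. X$j$j \<noteq> 0}"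
          by (intro card_Diff1_less) auto
        thus ?thesis using cn by simp
      qed
      finally have "0 \<le> tr2 P X'" using less X'p by blast
      moreover have "tr2 P X = tr2 P X' + bf P y y"
        by (simp add: X'_def tr2_diff tr2_outer)
      moreover have "0 \<le> bf P y y" using P posf_def by auto
      ultimately show ?thesis by simp
    qed
  qed
qed

lemma tr2_nonneg: "posf P \<Longrightarrow> posf X \<Longrightarrow> 0 \<le> tr2 P X"
  using tr2_nonneg_aux by blast



lemma sym_iff: "symmetric_mat M \<longleftrightarrow> (\<forall>i j. M$i$j = M$j$i)"
  unfolding symmetric_mat_def transpose_def vec_eq_iff by auto

lemma bf_comb:
  assumes "symmetric_mat M"
  shows "bf M (a *\<^sub>R u + b *\<^sub>R v) (a *\<^sub>R u + b *\<^sub>R v) = a*a*bf M u u + 2*a*b*bf M u v + b*b*bf M v v"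
  using bf_sym[OF assms, of v u]
  by (simp add: bf_add_l bf_add_r bf_scale_l bf_scale_r algebra_simps)

lemma cont_qf: "continuous_on S (\<lambda>x. bf M x x)"
  unfolding bf_def by (intro continuous_intros)

lemma isCont_qf: "isCont (\<lambda>x. bf M x x) l"
  using cont_qf[of UNIV M] by (simp add: continuous_on_eq_continuous_at)

definition lam :: "real^'k^'k \<Rightarrow> real" where
  "lam M = Sup ((\<lambda>x. bf M x x) ` sphere 0 1)"

lemma lam_props: "(\<exists>x. norm x = 1 \<and> bf M x x = lam M) \<and> (\<forall>y. norm y = 1 \<longrightarrow> bf M y y \<le> lam M)"
proof -
  obtain x where x: "x \<in> sphere (0::real^'a) 1" and mx: "\<forall>y\<in>sphere 0 1. bf M y y \<le> bf M x x"
    using continuous_attains_sup[OF compact_sphere _ cont_qf, of 0 1 M] by auto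
  have "lam M = bf M x x" unfolding lam_def
    by (rule cSup_eq_maximum) (use x mx in auto)
  thus ?thesis using x mx by auto
qed

lemma lam_att: obtains x where "norm x = 1" "bf M x x = lam M"
  using lam_props by blast

lemma lam_ge: "norm y = 1 \<Longrightarrow> bf M y y \<le> lam M"
  using lam_props by blast

lemma lam_hom: "bf M y y \<le> lam M * (y \<bullet> y)"
proof (cases "y = 0")
  case True thus ?thesis by (simp add: bf_def)
next
  case False
  define u where "u = (1/norm y) *\<^sub>R y"
  have nu: "norm u = 1" using False by (simp add: u_def)
  have "bf M u u = bf M y y / (norm y * norm y)"
    by (simp add: u_def bf_scale_l bf_scale_r)
  moreover have "y \<bullet> y = norm y * norm y" by (simp add: power2_norm_eq_inner[symmetric] power2_eq_square)
  moreover have "norm y > 0" using False by simp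
  ultimately show ?thesis using lam_ge[OF nu, of M] by (simp add: divide_le_eq mult.commute)
qed

definition Kb :: "real^'k^'k \<Rightarrow> real" where
  "Kb M = (\<Sum>i\<in>UNIV. \<Sum>j\<in>UNIV. \<bar>M$i$j\<bar>)"

lemma Kb_bound: assumes "norm x = 1" shows "\<bar>bf M x x\<bar> \<le> Kb M"
proof -
  have "\<bar>bf M x x\<bar> \<le> (\<Sum>i\<in>UNIV. \<Sum>j\<in>UNIV. \<bar>x$i * M$i$j * x$j\<bar>)"
    unfolding bf_def by (rule order_trans[OF sum_abs]) (intro sum_mono sum_abs)
  also have "\<dots> \<le> Kb M" unfolding Kb_def
  proof (intro sum_mono)
    fix i j
    have "\<bar>x$i\<bar> \<le> 1" "\<bar>x$j\<bar> \<le> 1" using component_le_norm_cart[of x] assms by auto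
    hence "\<bar>x$i\<bar> * \<bar>x$j\<bar> \<le> 1" by (simp add: mult_le_one)
    hence "\<bar>M$i$j\<bar> * (\<bar>x$i\<bar> * \<bar>x$j\<bar>) \<le> \<bar>M$i$j\<bar> * 1" by (intro mult_left_mono) auto
    thus "\<bar>x$i * M$i$j * x$j\<bar> \<le> \<bar>M$i$j\<bar>" by (simp add: abs_mult algebra_simps)
  qed
  finally show ?thesis .
qed

lemma interp:
  assumes sA: "symmetric_mat A" and sD: "symmetric_mat D"
    and nu: "norm u = 1" and nv: "norm v = 1"
    and au: "bf A u u = lam A" and av: "bf A v v = lam A"
    and du: "bf D u u \<ge> 0" and dv: "bf D v v \<le> 0"
  shows "\<exists>x. norm x = 1 \<and> bf D x x = 0 \<and> bf A x x = lam A"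
proof (cases "bf D u u = 0")
  case True thus ?thesis using nu au by blast
next
  case False
  hence dup: "bf D u u > 0" using du by simp
  define P where "P = lam A *\<^sub>R mat 1 - A"
  have bfP: "bf P x y = lam A * (x \<bullet> y) - bf A x y" for x y
    by (simp add: P_def bf_mat_diff bf_mat_scale bf_mat1)
  have smat1: "symmetric_mat (mat 1 :: real^'a^'a)"
    by (simp add: sym_iff mat_def)
  have sP: "symmetric_mat P"
    using sA smat1 by (simp add: P_def sym_iff)
  have pP: "posf P" unfolding posf_def using sP bfP lam_hom[of A] by simp
  have uu: "u \<bullet> u = 1" "v \<bullet> v = 1" using nu nv by (simp_all add: power2_norm_eq_inner[symmetric])
  have Pu: "bf P u u = 0" "bf P v v = 0" using bfP uu au av by simp_all
  have Puv: "bf P u v = 0" using cs[OF pP, of u v] Pu by (smt (verit) mult_le_0_iff)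
  define h where "h t = (1-t)*(1-t)*bf D u u + 2*(1-t)*t*bf D u v + t*t*bf D v v" for t
  have "\<exists>t\<ge>0. t \<le> 1 \<and> h t = 0"
    by (rule IVT2) (use dup dv in \<open>auto simp: h_def intro!: continuous_intros\<close>)
  then obtain t where t: "0 \<le> t" "t \<le> 1" "h t = 0" by blast
  define w where "w = (1-t) *\<^sub>R u + t *\<^sub>R v"
  have Dw: "bf D w w = 0" using t(3) unfolding w_def h_def bf_comb[OF sD] by simp
  have Pw: "bf P w w = 0" unfolding w_def bf_comb[OF sP] Pu Puv by simp
  have w0: "w \<noteq> 0"
  proof
    assume "w = 0"
    hence e: "(1-t) *\<^sub>R u = - (t *\<^sub>R v)" unfolding w_def by (simp add: eq_neg_iff_add_eq_0)
    hence "norm ((1-t) *\<^sub>R u) = norm (t *\<^sub>R v)" by simp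
    hence "1 - t = t" using nu nv t by simp
    hence "t = 1/2" by simp
    hence "(1/2) *\<^sub>R u = (1/2) *\<^sub>R (- v)" using e by (simp only:) simp
    hence "u = - v" using scaleR_cancel_left[of "1/2" u "-v"] by simp
    hence "v = - u" by simp
    hence "bf D v v = bf D u u" by (simp add: bf_neg_l bf_def)
    thus False using dup dv by simp
  qed
  define x where "x = (1/norm w) *\<^sub>R w"
  have nx: "norm x = 1" using w0 by (simp add: x_def)
  have "x \<bullet> x = 1" using nx by (simp add: power2_norm_eq_inner[symmetric])
  moreover have "bf P x x = 0" by (simp add: x_def bf_scale_l bf_scale_r Pw)
  moreover have "bf D x x = 0" by (simp add: x_def bf_scale_l bf_scale_r Dw)
  ultimately show ?thesis using nx bfP[of x x] by auto
qed



lemma bfe: "bf (C + q *\<^sub>R D) x x = bf C x x + q * bf D x x"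
  by (simp add: bf_mat_add bf_mat_scale)

lemma Kb_nonneg: "0 \<le> Kb M"
  unfolding Kb_def by (intro sum_nonneg) auto

lemma side:
  fixes C D :: "real^'k^'k" and p s :: real
  assumes min: "\<forall>q. lam (C + p *\<^sub>R D) \<le> lam (C + q *\<^sub>R D)" and s: "s = 1 \<or> s = -1"
  shows "\<exists>v. norm v = 1 \<and> 0 \<le> s * bf D v v \<and> bf (C + p *\<^sub>R D) v v = lam (C + p *\<^sub>R D)"
proof -
  define A where "A = C + p *\<^sub>R D"
  define L where "L = lam A"
  define K where "K = Kb D"
  define e where "e n = s / real (Suc n)" for n
  define xs where "xs n = (SOME x. norm x = 1 \<and> bf (C + (p + e n) *\<^sub>R D) x x = lam (C + (p + e n) *\<^sub>R D))" for n
  have xs: "norm (xs n) = 1 \<and> bf (C + (p + e n) *\<^sub>R D) (xs n) (xs n) = lam (C + (p + e n) *\<^sub>R D)" for n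
    unfolding xs_def by (rule someI_ex) (meson lam_att)
  have bA: "bf A x x = bf C x x + p * bf D x x" for x unfolding A_def by (rule bfe)
  have key: "L \<le> bf A (xs n) (xs n) + e n * bf D (xs n) (xs n)" for n
  proof -
    have "L \<le> lam (C + (p + e n) *\<^sub>R D)" using min unfolding L_def A_def by blast
    also have "\<dots> = bf (C + (p + e n) *\<^sub>R D) (xs n) (xs n)" using xs[of n] by simp
    also have "\<dots> = bf C (xs n) (xs n) + (p + e n) * bf D (xs n) (xs n)" by (rule bfe)
    also have "\<dots> = bf A (xs n) (xs n) + e n * bf D (xs n) (xs n)"
      by (simp add: bA algebra_simps)
    finally show ?thesis .
  qed
  have f1: "0 \<le> s * bf D (xs n) (xs n)" for n
  proof -
    have "bf A (xs n) (xs n) \<le> L" unfolding L_def using xs[of n] lam_ge by blast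
    hence "0 \<le> e n * bf D (xs n) (xs n)" using key[of n] by simp
    hence "0 \<le> real (Suc n) * (e n * bf D (xs n) (xs n))" by simp
    thus ?thesis by (simp add: e_def)
  qed
  have f2: "L \<le> bf A (xs n) (xs n) + K * inverse (real (Suc n))" for n
  proof -
    have "\<bar>bf D (xs n) (xs n)\<bar> \<le> K" unfolding K_def using xs Kb_bound by blast
    hence "e n * bf D (xs n) (xs n) \<le> \<bar>e n\<bar> * K"
      by (metis abs_ge_self abs_mult abs_ge_zero mult_left_mono order_trans)
    also have "\<bar>e n\<bar> = inverse (real (Suc n))" using s by (auto simp: e_def divide_inverse)
    finally show ?thesis using key[of n] by (simp add: mult.commute)
  qed
  have "xs n \<in> sphere 0 1" for n using xs by simp
  then obtain l r where l: "l \<in> sphere 0 1" and r: "strict_mono r" and lim: "(xs \<circ> r) \<longlonglongrightarrow> l"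
    using compact_sphere[of "0::real^'k" 1] unfolding compact_def by meson
  have lim': "(\<lambda>n. xs (r n)) \<longlonglongrightarrow> l" using lim by (simp add: o_def)
  have t1: "(\<lambda>n. bf D (xs (r n)) (xs (r n))) \<longlonglongrightarrow> bf D l l"
    by (rule isCont_tendsto_compose[OF isCont_qf lim'])
  have g1: "0 \<le> s * bf D l l"
    by (rule LIMSEQ_le_const[OF tendsto_mult_left[OF t1]]) (use f1 in blast)
  have t2: "(\<lambda>n. bf A (xs (r n)) (xs (r n))) \<longlonglongrightarrow> bf A l l"
    by (rule isCont_tendsto_compose[OF isCont_qf lim'])
  have t3: "(\<lambda>n. inverse (real (Suc (r n)))) \<longlonglongrightarrow> 0"
    using LIMSEQ_subseq_LIMSEQ[OF LIMSEQ_inverse_real_of_nat r] by (simp add: o_def)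
  have t4: "(\<lambda>n. bf A (xs (r n)) (xs (r n)) + K * inverse (real (Suc (r n)))) \<longlonglongrightarrow> bf A l l + K * 0"
    by (intro tendsto_intros t2 t3)
  have g2: "L \<le> bf A l l"
    using LIMSEQ_le_const[OF t4, of L] f2 by simp
  have nl: "norm l = 1" using l by simp
  have "bf A l l \<le> L" unfolding L_def using lam_ge[OF nl] .
  hence "bf A l l = L" using g2 by simp
  thus ?thesis using nl g1 unfolding A_def L_def by blast
qed

lemma core:
  fixes C D :: "real^'k^'k"
  assumes sC: "symmetric_mat C" and sD: "symmetric_mat D"
    and hyp: "(\<forall>y. bf D y y = 0) \<or> ((\<exists>y. bf D y y > 0) \<and> (\<exists>y. bf D y y < 0))"
  shows "\<exists>p x. norm x = 1 \<and> bf D x x = 0 \<and> bf (C + p *\<^sub>R D) x x = lam (C + p *\<^sub>R D)"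
proof (cases "\<forall>y. bf D y y = 0")
  case True
  obtain x where "norm x = 1" "bf (C + 0 *\<^sub>R D) x x = lam (C + 0 *\<^sub>R D)" by (rule lam_att)
  thus ?thesis using True by blast
next
  case False
  with hyp obtain y1 y2 where d1: "bf D y1 y1 > 0" and d2: "bf D y2 y2 < 0" by blast
  define g where "g q = lam (C + q *\<^sub>R D)" for q
  define K where "K = Kb D"
  have lower: "bf C y y + q * bf D y y \<le> g q * (y \<bullet> y)" for y q
    using lam_hom[of "C + q *\<^sub>R D" y] by (simp add: g_def bfe)
  have lip: "g q \<le> g q' + \<bar>q - q'\<bar> * K" for q q'
  proof -
    obtain x where nx: "norm x = 1" and gx: "bf (C + q *\<^sub>R D) x x = g q"
      using lam_att unfolding g_def by blast
    have dK: "\<bar>bf D x x\<bar> \<le> K" unfolding K_def using Kb_bound[OF nx] .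
    have "(q - q') * bf D x x \<le> \<bar>q - q'\<bar> * K"
      by (metis abs_ge_self abs_mult abs_ge_zero dK mult_left_mono order_trans)
    moreover have "bf C x x + q' * bf D x x \<le> g q'"
      using lam_ge[OF nx, of "C + q' *\<^sub>R D"] by (simp add: g_def bfe)
    moreover have "g q = bf C x x + q * bf D x x" using gx bfe by metis
    ultimately show ?thesis by (simp add: algebra_simps)
  qed
  define a1 where "a1 = bf C y1 y1"
  define n1 where "n1 = y1 \<bullet> y1"
  define e1 where "e1 = bf D y1 y1"
  define a2 where "a2 = bf C y2 y2"
  define n2 where "n2 = y2 \<bullet> y2"
  define e2 where "e2 = bf D y2 y2"
  have n1: "n1 > 0"
  proof -
    have "y1 \<noteq> 0" using d1 by (auto simp: bf_def)
    thus ?thesis by (simp add: n1_def)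
  qed
  have n2: "n2 > 0"
  proof -
    have "y2 \<noteq> 0" using d2 by (auto simp: bf_def)
    thus ?thesis by (simp add: n2_def)
  qed
  define R where "R = \<bar>(g 0 * n1 - a1)/e1\<bar> + \<bar>(g 0 * n2 - a2)/e2\<bar> + 1"
  have out: "g 0 < g q" if "\<not> (-R \<le> q \<and> q \<le> R)" for q
  proof (cases "q > R")
    case True
    hence "q > (g 0 * n1 - a1)/e1" unfolding R_def by linarith
    hence "q * e1 > g 0 * n1 - a1" using d1 e1_def by (simp add: pos_divide_less_eq)
    hence "g 0 * n1 < g q * n1" using lower[of y1 q] unfolding a1_def n1_def e1_def by linarith
    thus ?thesis using n1 by simp
  next
    case False
    hence "q < - R" using that by linarith
    hence "q < (g 0 * n2 - a2)/e2" unfolding R_def by linarith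
    hence "q * e2 > g 0 * n2 - a2" using d2 e2_def by (simp add: neg_less_divide_eq)
    hence "g 0 * n2 < g q * n2" using lower[of y2 q] unfolding a2_def n2_def e2_def by linarith
    thus ?thesis using n2 by simp
  qed
  have "K-lipschitz_on {-R..R} g"
    unfolding lipschitz_on_def
  proof (intro conjI ballI)
    show "0 \<le> K" unfolding K_def by (rule Kb_nonneg)
    fix q q' assume "q \<in> {-R..R}" "q' \<in> {-R..R}"
    show "dist (g q) (g q') \<le> K * dist q q'"
      using lip[of q q'] lip[of q' q] by (simp add: dist_real_def abs_minus_commute mult.commute abs_le_iff)
  qed
  hence cont: "continuous_on {-R..R} g" by (rule lipschitz_on_continuous_on)
  have R0: "0 \<le> R" unfolding R_def by simp
  obtain p where p: "p \<in> {-R..R}" and pm: "\<forall>q\<in>{-R..R}. g p \<le> g q"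
    using continuous_attains_inf[OF compact_Icc _ cont] R0 by auto
  have gmin: "\<forall>q. g p \<le> g q"
  proof
    fix q show "g p \<le> g q"
    proof (cases "-R \<le> q \<and> q \<le> R")
      case True thus ?thesis using pm by auto
    next
      case False
      have "g p \<le> g 0" using pm R0 by auto
      thus ?thesis using out[OF False] by simp
    qed
  qed
  hence gm: "\<forall>q. lam (C + p *\<^sub>R D) \<le> lam (C + q *\<^sub>R D)" unfolding g_def .
  obtain u where u: "norm u = 1" "0 \<le> 1 * bf D u u" "bf (C + p *\<^sub>R D) u u = lam (C + p *\<^sub>R D)"
    using side[OF gm, of 1] by auto
  obtain v where v: "norm v = 1" "0 \<le> -1 * bf D v v" "bf (C + p *\<^sub>R D) v v = lam (C + p *\<^sub>R D)"
    using side[OF gm, of "-1"] by auto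
  have sA: "symmetric_mat (C + p *\<^sub>R D)" using sC sD by (simp add: sym_iff)
  show ?thesis using interp[OF sA sD u(1) v(1) u(3) v(3)] u(2) v(2) by auto
qed



lemma tr2_ptrans: "tr2 M (ptrans N) = tr2 (ptrans M) N"
proof -
  have "tr2 M (ptrans N) = (\<Sum>(i,j)\<in>UNIV\<times>UNIV. M$i$j * N$(fst j, snd i)$(fst i, snd j))"
    unfolding tr2_def ptrans_def by (simp add: sum.cartesian_product)
  also have "\<dots> = (\<Sum>(i,j)\<in>UNIV\<times>UNIV. M$(fst i, snd j)$(fst j, snd i) * N$j$i)"
    by (rule sum.reindex_bij_witness[where i="\<lambda>(i,j). ((fst i, snd j), (fst j, snd i))"
          and j="\<lambda>(i,j). ((fst i, snd j), (fst j, snd i))"]) auto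
  also have "\<dots> = tr2 (ptrans M) N"
    unfolding tr2_def ptrans_def by (simp add: sum.cartesian_product)
  finally show ?thesis .
qed

lemma tr2_lin: "tr2 (p *\<^sub>R M + q *\<^sub>R N) X = p * tr2 M X + q * tr2 N X"
  by (simp add: tr2_def algebra_simps sum.distrib sum_distrib_left)

lemma tr2_mat1: "tr2 (mat 1) X = trace X"
proof -
  have "\<And>i j. (mat 1 :: real^'a^'a)$i$j * X$j$i = (if i = j then X$i$i else 0)" by (simp add: mat_def)
  thus ?thesis by (simp add: tr2_def trace_def)
qed

lemma tr2_diffl: "tr2 (M - N) X = tr2 M X - tr2 N X"
  by (simp add: tr2_def algebra_simps sum_subtractf)
lemma tr2_scalel: "tr2 (c *\<^sub>R M) X = c * tr2 M X"
  by (simp add: tr2_def algebra_simps sum_distrib_left)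

lemma term_cx:
  fixes a d :: complex and b c :: real
  shows "cnj a * (complex_of_real b + \<i> * complex_of_real c) * d =
     Complex (b*(Re a*Re d + Im a*Im d) - c*(Re a*Im d - Im a*Re d)) (b*(Re a*Im d - Im a*Re d) + c*(Re a*Re d + Im a*Im d))"
  by (simp add: complex_eq_iff algebra_simps)

theorem mainTheorem4:
  fixes B :: "('m::finite, 'n::finite) bimat"
  assumes "symmetric_mat B"
  shows "W1i_max B = Sup {trace (B ** X) | X. symmetric_mat X \<and> trace (B ** X) = trace (B ** ptrans X)
                                          \<and> trace X = 1 \<and> psd X}
       \<and> W1i_max B = Inf {c. \<exists>p. psd (c *\<^sub>R mat 1 - (p *\<^sub>R B + (1 - p) *\<^sub>R ptrans B))}"
proof -
  note sB = assms
  define C where "C = ptrans B"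
  define D where "D = B - C"
  have sC: "symmetric_mat C" using sB
    by (simp add: sym_iff C_def ptrans_def)
  have sD: "symmetric_mat D" using sB sC by (simp add: sym_iff D_def)
  have Ddiag: "D$i$i = 0" for i by (simp add: D_def C_def ptrans_def)
  have bfD: "bf D y y = bf B y y - bf C y y" for y by (simp add: D_def bf_mat_diff)
  have hyp: "(\<forall>y. bf D y y = 0) \<or> ((\<exists>y. bf D y y > 0) \<and> (\<exists>y. bf D y y < 0))"
  proof (rule ccontr)
    assume H: "\<not> ?thesis"
    then obtain y0 where y0: "bf D y0 y0 \<noteq> 0" by blast
    show False
    proof (cases "\<exists>y. bf D y y < 0")
      case False
      hence "posf D" using sD by (auto simp: posf_def not_less)
      hence "\<And>i j. D$i$j = 0" using posf_diag_zero Ddiag by blast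
      hence "bf D y0 y0 = 0" by (simp add: bf_def)
      thus False using y0 by simp
    next
      case True
      hence nP: "\<not> (\<exists>y. bf D y y > 0)" using H by blast
      have "posf (-D)" using sD nP by (auto simp: posf_def not_less sym_iff bf_def sum_negf)
      moreover have "(-D)$i$i = 0" for i using Ddiag by simp
      ultimately have "\<And>i j. (-D)$i$j = 0" using posf_diag_zero by blast
      hence "bf D y0 y0 = 0" by (simp add: bf_def)
      thus False using y0 by simp
    qed
  qed
  obtain p x where nx: "norm x = 1" and Dx: "bf D x x = 0"
    and Ax: "bf (C + p *\<^sub>R D) x x = lam (C + p *\<^sub>R D)"
    using core[OF sC sD hyp] by blast
  define A where "A = C + p *\<^sub>R D"
  define L where "L = lam A"
  have Aeq: "p *\<^sub>R B + (1 - p) *\<^sub>R ptrans B = A"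
    by (simp add: A_def D_def C_def vec_eq_iff algebra_simps)
  have bfA: "bf A y y = p * bf B y y + (1 - p) * bf C y y" for y
    by (simp add: A_def bfe bfD algebra_simps)
  have CxL: "bf C x x = L" and BxL: "bf B x x = L"
    using Ax Dx bfD[of x] by (simp_all add: A_def L_def bfe)
  have xx: "x \<bullet> x = 1" using nx by (simp add: power2_norm_eq_inner[symmetric])
  have sA: "symmetric_mat A" using sC sD by (simp add: A_def sym_iff)
  have smat1: "symmetric_mat (mat 1 :: ('m,'n) bimat)" by (simp add: sym_iff mat_def)
  have posP: "posf (L *\<^sub>R mat 1 - A)"
    unfolding posf_def using sA smat1 lam_hom[of A]
    by (simp add: sym_iff bf_mat_diff bf_mat_scale bf_mat1 L_def)
  have W: "W1i_max B = L"
    unfolding W1i_max_def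
  proof (rule cSup_eq_maximum)
    define z :: "complex^('m\<times>'n)" where "z = (\<chi> i. complex_of_real (x$i))"
    have nz: "norm z = 1" using nx by (simp add: z_def norm_vec_def)
    have "(\<Sum>i\<in>UNIV. \<Sum>j\<in>UNIV. cnj (z $ i) * (\<chi> i j. complex_of_real (B $ i $ j) + \<i> * complex_of_real (ptrans B $ i $ j)) $ i $ j * z $ j)
        = complex_of_real (bf B x x) + \<i> * complex_of_real (bf C x x)"
      by (simp add: z_def bf_def C_def algebra_simps sum.distrib sum_distrib_left)
    also have "\<dots> = complex_of_real L * (1 + \<i>)" by (simp add: BxL CxL algebra_simps)
    finally show "L \<in> W1i B" unfolding W1i_def numerical_range_def using nz by force
  next
    fix c assume "c \<in> W1i B"
    then obtain z :: "complex^('m\<times>'n)" where nz: "norm z = 1" and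
      zc: "complex_of_real c * (1 + \<i>) = (\<Sum>i\<in>UNIV. \<Sum>j\<in>UNIV. cnj (z $ i) * (complex_of_real (B $ i $ j) + \<i> * complex_of_real (C $ i $ j)) * z $ j)"
      unfolding W1i_def numerical_range_def C_def by auto
    define u :: "real^('m\<times>'n)" where "u = (\<chi> i. Re (z$i))"
    define v :: "real^('m\<times>'n)" where "v = (\<chi> i. Im (z$i))"
    have "c = Re (complex_of_real c * (1 + \<i>))" by simp
    also have "\<dots> = bf B u u + bf B v v - (bf C u v - bf C v u)"
      unfolding zc term_cx by (simp add: Re_sum bf_def u_def v_def algebra_simps sum.distrib sum_subtractf)
    finally have c1: "c = bf B u u + bf B v v" using bf_sym[OF sC, of u v] by simp
    have "c = Im (complex_of_real c * (1 + \<i>))" by simp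
    also have "\<dots> = (bf B u v - bf B v u) + bf C u u + bf C v v"
      unfolding zc term_cx by (simp add: Im_sum bf_def u_def v_def algebra_simps sum.distrib sum_subtractf)
    finally have c2: "c = bf C u u + bf C v v" using bf_sym[OF sB, of u v] by simp
    have uv: "u \<bullet> u + v \<bullet> v = 1"
    proof -
      have "(norm z)^2 = (\<Sum>i\<in>UNIV. (cmod (z$i))^2)" by (simp add: norm_vec_def L2_set_def sum_nonneg)
      also have "\<dots> = u \<bullet> u + v \<bullet> v"
      proof -
        have "(cmod (z$i))^2 = Re (z$i) * Re (z$i) + Im (z$i) * Im (z$i)" for i
          by (subst cmod_power2) (simp add: power2_eq_square)
        thus ?thesis by (simp add: inner_vec_def u_def v_def sum.distrib)
      qed
      finally show ?thesis using nz by simp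
    qed
    have "bf A u u + bf A v v = p * (bf B u u + bf B v v) + (1 - p) * (bf C u u + bf C v v)"
      using bfA[of u] bfA[of v] by (simp add: algebra_simps)
    also have "\<dots> = p * c + (1 - p) * c" using c1 c2 by simp
    finally have "c = bf A u u + bf A v v" by (simp add: algebra_simps)
    also have "\<dots> \<le> L * (u \<bullet> u) + L * (v \<bullet> v)" using lam_hom[of A] L_def by (simp add: add_mono)
    also have "\<dots> = L * (u \<bullet> u + v \<bullet> v)" by (simp add: distrib_left)
    also have "\<dots> = L" using uv by simp
    finally show "c \<le> L" .
  qed
  have S: "Sup {trace (B ** X) | X. symmetric_mat X \<and> trace (B ** X) = trace (B ** ptrans X)
                                          \<and> trace X = 1 \<and> psd X} = L"
  proof (rule cSup_eq_maximum)
    define X :: "('m,'n) bimat" where "X = (\<chi> i j. x$i * x$j)"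
    have sX: "symmetric_mat X" by (simp add: X_def sym_iff mult.commute)
    have tX: "trace X = 1" using xx by (simp add: X_def trace_def inner_vec_def power2_eq_square)
    have "bf X y y = (\<Sum>i\<in>UNIV. y$i * x$i) * (\<Sum>j\<in>UNIV. x$j * y$j)" for y
      by (simp add: X_def bf_def sum_product algebra_simps)
    hence "bf X y y = (\<Sum>i\<in>UNIV. y$i * x$i)^2" for y by (simp add: power2_eq_square mult.commute)
    hence pX: "psd X" using sX by (simp add: psd_posf posf_def)
    have t1: "trace (B ** X) = L" by (simp add: trace_tr2 X_def tr2_outer BxL)
    have t2: "trace (B ** ptrans X) = L"
      by (simp add: trace_tr2 tr2_ptrans X_def tr2_outer CxL[unfolded C_def])
    show "L \<in> {trace (B ** X) | X. symmetric_mat X \<and> trace (B ** X) = trace (B ** ptrans X)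
                                          \<and> trace X = 1 \<and> psd X}"
      using sX tX pX t1 t2 by force
  next
    fix t assume "t \<in> {trace (B ** X) | X. symmetric_mat X \<and> trace (B ** X) = trace (B ** ptrans X)
                                          \<and> trace X = 1 \<and> psd X}"
    then obtain X where t: "t = tr2 B X" and e: "tr2 B X = tr2 C X" and tX: "trace X = 1" and pX: "posf X"
      by (auto simp: trace_tr2 tr2_ptrans psd_posf C_def)
    have "0 \<le> tr2 (L *\<^sub>R mat 1 - A) X" by (rule tr2_nonneg[OF posP pX])
    also have "\<dots> = L - tr2 A X" by (simp add: tr2_diffl tr2_scalel tr2_mat1 tX)
    also have "tr2 A X = tr2 (p *\<^sub>R B + (1 - p) *\<^sub>R C) X" using Aeq C_def by simp
    also have "\<dots> = t" unfolding tr2_lin by (simp add: t e algebra_simps)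
    finally show "t \<le> L" by simp
  qed
  have I: "Inf {c. \<exists>p. psd (c *\<^sub>R mat 1 - (p *\<^sub>R B + (1 - p) *\<^sub>R ptrans B))} = L"
  proof (rule cInf_eq_minimum)
    show "L \<in> {c. \<exists>p. psd (c *\<^sub>R mat 1 - (p *\<^sub>R B + (1 - p) *\<^sub>R ptrans B))}"
      using posP Aeq by (auto simp: psd_posf)
  next
    fix c assume "c \<in> {c. \<exists>p. psd (c *\<^sub>R mat 1 - (p *\<^sub>R B + (1 - p) *\<^sub>R ptrans B))}"
    then obtain q where "posf (c *\<^sub>R mat 1 - (q *\<^sub>R B + (1 - q) *\<^sub>R C))"
      by (auto simp: psd_posf C_def)
    hence "0 \<le> bf (c *\<^sub>R mat 1 - (q *\<^sub>R B + (1 - q) *\<^sub>R C)) x x" by (simp add: posf_def)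
    also have "\<dots> = c - L"
      by (simp add: bf_mat_diff bf_mat_add bf_mat_scale bf_mat1 xx BxL CxL algebra_simps)
    finally show "L \<le> c" by simp
  qed
  show ?thesis using W S I by simp
qed


end
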